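(* Let $P$ be a finite sequence of nonnegative integers. Then $P$ is mirror bigraphic if and only if the pair $(P,P)$ is bigraphic.
   Context: For sequences $P,Q$ of nonnegative integers, the pair $(P,Q)$ is bigraphic if there is a bipartite graph $G=(V_1\cup V_2,E)$ (with stable sets $V_1,V_2$) whose vertices in $V_1$ have degrees equal to the elements of $P$ and whose vertices in $V_2$ have degrees equal to the elements of $Q$; such $G$ realizes $(P,Q)$. A bipartite graph $G=(V_1\cup V_2,E)$ is mirror if there is a bijection $\varphi:V_1\to V_2$ with $u\varphi(v)\in E \iff \varphi(u)v\in E$ for all $u,v\in V_1$. A sequence $P$ is mirror bigraphic if $(P,P)$ is bigraphic and some mirror bipartite graph realizes $(P,P)$. *)

theory Defs
  imports Main "HOL-Library.Multiset"
begin

text \<open>A bipartite graph is given by two finite vertex sets V1, V2 (kept as separate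
  sorts: V1 is the first, V2 the second component of an edge) and an edge set
  E \<subseteq> V1 \<times> V2. Vertices are labelled by natural numbers (every finite graph
  is isomorphic to such a graph).\<close>

definition bip_graph :: "nat set \<Rightarrow> nat set \<Rightarrow> (nat \<times> nat) set \<Rightarrow> bool" where
  "bip_graph V1 V2 E \<longleftrightarrow> finite V1 \<and> finite V2 \<and> E \<subseteq> V1 \<times> V2"

definition deg1 :: "(nat \<times> nat) set \<Rightarrow> nat set \<Rightarrow> nat \<Rightarrow> nat" where
  "deg1 E V2 u = card {w \<in> V2. (u, w) \<in> E}"

definition deg2 :: "(nat \<times> nat) set \<Rightarrow> nat set \<Rightarrow> nat \<Rightarrow> nat" where
  "deg2 E V1 w = card {u \<in> V1. (u, w) \<in> E}"

definition realizes :: "nat set \<Rightarrow> nat set \<Rightarrow> (nat \<times> nat) set \<Rightarrow> nat list \<Rightarrow> nat list \<Rightarrow> bool" where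
  "realizes V1 V2 E P Q \<longleftrightarrow> bip_graph V1 V2 E
     \<and> image_mset (deg1 E V2) (mset_set V1) = mset P
     \<and> image_mset (deg2 E V1) (mset_set V2) = mset Q"

definition bigraphic :: "nat list \<Rightarrow> nat list \<Rightarrow> bool" where
  "bigraphic P Q \<longleftrightarrow> (\<exists>V1 V2 E. realizes V1 V2 E P Q)"

definition mirror :: "nat set \<Rightarrow> nat set \<Rightarrow> (nat \<times> nat) set \<Rightarrow> bool" where
  "mirror V1 V2 E \<longleftrightarrow> (\<exists>\<phi>. bij_betw \<phi> V1 V2 \<and>
     (\<forall>u\<in>V1. \<forall>v\<in>V1. (u, \<phi> v) \<in> E \<longleftrightarrow> (v, \<phi> u) \<in> E))"

definition mirror_bigraphic :: "nat list \<Rightarrow> bool" where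
  "mirror_bigraphic P \<longleftrightarrow> bigraphic P P \<and> (\<exists>V1 V2 E. mirror V1 V2 E \<and> realizes V1 V2 E P P)"

end

theory Submission
  imports Defs
begin


lemma card_change3:
  fixes F G :: "nat \<Rightarrow> bool"
  assumes fin: "finite I" and abc: "a \<in> I" "b \<in> I" "c \<in> I"
    and d: "a \<noteq> b" "a \<noteq> c" "b \<noteq> c"
    and eq: "\<And>w. w \<in> I \<Longrightarrow> w \<noteq> a \<Longrightarrow> w \<noteq> b \<Longrightarrow> w \<noteq> c \<Longrightarrow> F w = G w"
  shows "int (card {w\<in>I. F w}) = int (card {w\<in>I. G w})
     + (of_bool (F a) - of_bool (G a)) + (of_bool (F b) - of_bool (G b)) + (of_bool (F c) - of_bool (G c))"
proof -
  have cF: "int (card {w\<in>I. F w}) = (\<Sum>w\<in>I. of_bool (F w))"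
    using fin by (simp add: sum_of_bool_eq Int_def conj_commute)
  have cG: "int (card {w\<in>I. G w}) = (\<Sum>w\<in>I. of_bool (G w))"
    using fin by (simp add: sum_of_bool_eq Int_def conj_commute)
  have z: "\<forall>w\<in>I - {a, b, c}. (of_bool (F w) - of_bool (G w) :: int) = 0"
      using eq by simp
  have "(\<Sum>w\<in>I. of_bool (F w)) - (\<Sum>w\<in>I. of_bool (G w)) = (\<Sum>w\<in>I. (of_bool (F w) - of_bool (G w) :: int))"
    by (simp add: sum_subtractf)
  also have "\<dots> = (\<Sum>w\<in>{a,b,c}. (of_bool (F w) - of_bool (G w) :: int))"
    using abc fin z by (intro sum.mono_neutral_right) auto
  also have "\<dots> = (of_bool (F a) - of_bool (G a)) + (of_bool (F b) - of_bool (G b)) + (of_bool (F c) - of_bool (G c))"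
    using d by simp
  finally show ?thesis using cF cG by linarith
qed

lemma key_arith:
  assumes "p > 0"
  shows "of_bool (even (s mod p) = b) + of_bool (even (Suc s mod p) = b) - 1
     + (if odd p \<and> Suc s mod p = 0 then (if b then -1 else 1) else 0) = (0::int)"
proof (cases "Suc (s mod p) = p")
  case True
  then have "Suc s mod p = 0" by (simp add: mod_Suc)
  moreover have "s mod p = p - 1" using True by simp
  ultimately show ?thesis using assms True by (cases b) auto
next
  case False
  then have "Suc s mod p = Suc (s mod p)" by (simp add: mod_Suc)
  then show ?thesis by (cases b) auto
qed

lemma cycle_exists:
  fixes R :: "nat \<Rightarrow> nat \<Rightarrow> bool"
  assumes fin: "finite I"
    and inI: "\<And>x y. R x y \<Longrightarrow> x \<in> I \<and> y \<in> I"
    and out: "\<And>x z. R z x \<Longrightarrow> \<exists>y. R x y"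
    and r0: "R u0 w0"
  shows "\<exists>v p. p > 0 \<and> (\<forall>t. R (v t) (v (Suc t))) \<and> (\<forall>t. v (t mod p) = v t) \<and> inj_on v {..<p}"
proof -
  define f where "f y = (SOME z. R y z)" for y
  define g where "g n = (f ^^ n) w0" for n
  have hasin: "\<exists>z. R z (g n)" for n
  proof (induction n)
    case 0 then show ?case using r0 by (auto simp: g_def)
  next
    case (Suc n)
    then obtain z where "R z (g n)" by blast
    then have "\<exists>y. R (g n) y" using out by blast
    then have "R (g n) (f (g n))" unfolding f_def by (rule someI_ex)
    then show ?case by (auto simp: g_def)
  qed
  have step: "R (g n) (g (Suc n))" for n
  proof -
    have "\<exists>y. R (g n) y" using hasin[of n] out by blast
    then have "R (g n) (f (g n))" unfolding f_def by (rule someI_ex)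
    then show ?thesis by (simp add: g_def)
  qed
  have gI: "g n \<in> I" for n using step[of n] inI by blast
  have "\<not> inj_on g {..card I}"
  proof
    assume "inj_on g {..card I}"
    then have "card (g ` {..card I}) = Suc (card I)" by (simp add: card_image)
    moreover have "card (g ` {..card I}) \<le> card I" using gI fin by (intro card_mono) auto
    ultimately show False by simp
  qed
  then obtain i j where ij: "i < j" "g i = g j"
    unfolding inj_on_def by (metis linorder_neqE_nat)
  define c where "c = g i"
  have gadd: "g (i + t) = (f ^^ t) c" for t
    unfolding g_def c_def by (simp add: add.commute[of i t] funpow_add)
  have cyc: "(f ^^ (j - i)) c = c" using ij gadd[of "j-i"] by (simp add: c_def)
  define p where "p = (LEAST p. 0 < p \<and> (f ^^ p) c = c)"
  have pprop: "0 < p \<and> (f ^^ p) c = c"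
    unfolding p_def by (rule LeastI[of _ "j - i"]) (use ij cyc in auto)
  have pmin: "\<And>q. 0 < q \<Longrightarrow> (f ^^ q) c = c \<Longrightarrow> p \<le> q"
    unfolding p_def by (rule Least_le) auto
  define v where "v t = (f ^^ t) c" for t
  have R1: "R (v t) (v (Suc t))" for t
    using step[of "i + t"] gadd[of t] gadd[of "Suc t"] by (simp add: v_def)
  have R2: "v (t mod p) = v t" for t
    unfolding v_def by (rule funpow_mod_eq) (use pprop in auto)
  have R3: "inj_on v {..<p}"
  proof (rule inj_onI)
    fix s t assume s: "s \<in> {..<p}" and t: "t \<in> {..<p}" and e: "v s = v t"
    show "s = t"
    proof (rule ccontr)
      assume "s \<noteq> t"
      then consider "s < t" | "t < s" by linarith
      then show False
      proof cases
        case 1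
        have "(f ^^ (t - s)) c = c"
        proof -
          have a: "(f ^^ (p - s)) ((f ^^ s) c) = c" using s pprop
            by (metis funpow_add le_add_diff_inverse2 less_imp_le_nat comp_apply lessThan_iff)
          have b: "(f ^^ (t - s)) ((f ^^ s) c) = (f ^^ s) c" using e 1
            unfolding v_def by (metis funpow_add le_add_diff_inverse2 less_imp_le_nat comp_apply)
          have "(f ^^ (t - s)) c = (f ^^ (t - s)) ((f ^^ (p - s)) ((f ^^ s) c))" using a by simp
          also have "\<dots> = (f ^^ (p - s)) ((f ^^ (t - s)) ((f ^^ s) c))"
            by (metis add.commute funpow_add comp_apply)
          also have "\<dots> = c" using a b by simp
          finally show ?thesis .
        qed
        then have "p \<le> t - s" using pmin 1 by simp
        then show False using t by simp
      next
        case 2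
        have "(f ^^ (s - t)) c = c"
        proof -
          have a: "(f ^^ (p - t)) ((f ^^ t) c) = c" using t pprop
            by (metis funpow_add le_add_diff_inverse2 less_imp_le_nat comp_apply lessThan_iff)
          have b: "(f ^^ (s - t)) ((f ^^ t) c) = (f ^^ t) c" using e 2
            unfolding v_def by (metis funpow_add le_add_diff_inverse2 less_imp_le_nat comp_apply)
          have "(f ^^ (s - t)) c = (f ^^ (s - t)) ((f ^^ (p - t)) ((f ^^ t) c))" using a by simp
          also have "\<dots> = (f ^^ (p - t)) ((f ^^ (s - t)) ((f ^^ t) c))"
            by (metis add.commute funpow_add comp_apply)
          also have "\<dots> = c" using a b by simp
          finally show ?thesis .
        qed
        then have "p \<le> s - t" using pmin 2 by simp
        then show False using s by simp
      qed
    qed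
  qed
  show ?thesis using pprop R1 R2 R3 by blast
qed



definition balanced :: "nat set \<Rightarrow> (nat \<Rightarrow> nat \<Rightarrow> bool) \<Rightarrow> bool" where
  "balanced I M \<longleftrightarrow> (\<forall>u\<in>I. card {w\<in>I. M u w} = card {w\<in>I. M w u})"

definition asym :: "nat set \<Rightarrow> (nat \<Rightarrow> nat \<Rightarrow> bool) \<Rightarrow> (nat \<times> nat) set" where
  "asym I M = {(a, b). a \<in> I \<and> b \<in> I \<and> M a b \<and> \<not> M b a}"

lemma mod_Suc_cancel:
  fixes s t p :: nat
  assumes "Suc s mod p = Suc t mod p"
  shows "s mod p = t mod p"
proof (cases "p = 0")
  case True then show ?thesis using assms by simp
next
  case False
  have "s mod p = (Suc s + (p - 1)) mod p"
  proof -
    have "Suc s + (p - 1) = s + p" using False by simp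
    then show ?thesis by simp
  qed
  also have "\<dots> = (Suc s mod p + (p - 1)) mod p" by (simp add: mod_add_left_eq)
  also have "\<dots> = (Suc t mod p + (p - 1)) mod p" using assms by simp
  also have "\<dots> = (Suc t + (p - 1)) mod p" by (simp add: mod_add_left_eq)
  also have "\<dots> = t mod p"
  proof -
    have "Suc t + (p - 1) = t + p" using False by simp
    then show ?thesis by simp
  qed
  finally show ?thesis .
qed

lemma step:
  assumes fin: "finite I" and bal: "balanced I M" and ne: "asym I M \<noteq> {}"
  shows "\<exists>N. balanced I N \<and> (\<forall>u\<in>I. card {w\<in>I. N u w} = card {w\<in>I. M u w}) \<and> asym I N \<subset> asym I M"
proof -
  define R where "R a c \<longleftrightarrow> (a, c) \<in> asym I M" for a c
  have RI: "R a c \<Longrightarrow> a \<in> I \<and> c \<in> I" for a c by (auto simp: R_def asym_def)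
  have RM: "R a c \<Longrightarrow> M a c \<and> \<not> M c a" for a c by (auto simp: R_def asym_def)
  have Rasym: "R a c \<Longrightarrow> \<not> R c a" for a c by (auto simp: R_def asym_def)
  have Rirr: "\<not> R a a" for a by (auto simp: R_def asym_def)
  have out: "\<exists>y. R x y" if "R z x" for x z
  proof (rule ccontr)
    assume no: "\<not> (\<exists>y. R x y)"
    have xI: "x \<in> I" and zI: "z \<in> I" using RI[OF that] by auto
    have "{w\<in>I. M x w} \<subset> {w\<in>I. M w x}"
    proof
      show "{w\<in>I. M x w} \<subseteq> {w\<in>I. M w x}"
        using no xI by (auto simp: R_def asym_def)
      show "{w\<in>I. M x w} \<noteq> {w\<in>I. M w x}"
        using RM[OF that] zI by blast
    qed
    then have "card {w\<in>I. M x w} < card {w\<in>I. M w x}" using fin by (intro psubset_card_mono) auto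
    then show False using bal xI by (auto simp: balanced_def)
  qed
  obtain u0 w0 where "R u0 w0" using ne by (auto simp: R_def)
  then obtain v p where p0: "p > 0" and Rv: "\<And>t. R (v t) (v (Suc t))"
    and vmod: "\<And>t. v (t mod p) = v t" and vinj: "inj_on v {..<p}"
    using cycle_exists[of I R u0 w0] fin RI out by blast
  have vI: "v t \<in> I" for t using RI[OF Rv[of t]] by blast
  have veq: "v s = v t \<longleftrightarrow> s mod p = t mod p" for s t
  proof
    assume "v s = v t"
    then have "v (s mod p) = v (t mod p)" by (simp add: vmod)
    then show "s mod p = t mod p" using vinj p0 by (auto dest: inj_onD)
  next
    assume "s mod p = t mod p"
    then show "v s = v t" using vmod[of s] vmod[of t] by simp
  qed
  have vsuc: "v s = v t \<Longrightarrow> v (Suc s) = v (Suc t)" for s t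
    unfolding veq by (metis mod_Suc_eq)
  have vpred: "v (Suc s) = v (Suc t) \<Longrightarrow> v s = v t" for s t
    unfolding veq by (rule mod_Suc_cancel)
  have noloop: "v s \<noteq> v (Suc s)" for s using Rv[of s] Rirr by force
  have M1: "M (v s) (v (Suc s))" and M0: "\<not> M (v (Suc s)) (v s)" for s using RM[OF Rv[of s]] by auto
  have p3: "p \<ge> 3"
  proof (rule ccontr)
    assume "\<not> p \<ge> 3"
    then consider "p = 1" | "p = 2" using p0 by linarith
    then show False
    proof cases
      case 1 then have "v 0 = v (Suc 0)" using veq by simp
      then show False using noloop[of 0] by simp
    next
      case 2 then have "v (Suc (Suc 0)) = v 0" using veq by simp
      then show False using Rv[of 0] Rv[of 1] Rasym by (simp add: numeral_2_eq_2)
    qed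
  qed
  define b where "b = M (v 0) (v 0)"
  define x where "x t = (even t = b)" for t :: nat
  define N where "N a c = (if \<exists>t. x (t mod p) \<and> a = v (Suc t) \<and> c = v t then True
      else if \<exists>t. \<not> x (t mod p) \<and> a = v t \<and> c = v (Suc t) then False
      else if odd p \<and> a = v 0 \<and> c = v 0 then \<not> M a c else M a c)" for a c
  have E1: "N (v s) (v (Suc s)) = x (s mod p)" for s
  proof -
    have n1: "\<not> (\<exists>t. x (t mod p) \<and> v s = v (Suc t) \<and> v (Suc s) = v t)"
    proof
      assume "\<exists>t. x (t mod p) \<and> v s = v (Suc t) \<and> v (Suc s) = v t"
      then obtain t where "v s = v (Suc t)" "v (Suc s) = v t" by blast
      then have "R (v (Suc s)) (v s)" using Rv[of t] by simp
      then show False using Rv[of s] Rasym by blast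
    qed
    have n2: "(\<exists>t. \<not> x (t mod p) \<and> v s = v t \<and> v (Suc s) = v (Suc t)) \<longleftrightarrow> \<not> x (s mod p)"
    proof
      assume "\<exists>t. \<not> x (t mod p) \<and> v s = v t \<and> v (Suc s) = v (Suc t)"
      then obtain t where "\<not> x (t mod p)" "v s = v t" by blast
      then show "\<not> x (s mod p)" using veq by simp
    qed blast
    show ?thesis unfolding N_def using n1 n2 noloop[of s] M1[of s] by auto
  qed
  have E2: "N (v (Suc s)) (v s) = x (s mod p)" for s
  proof -
    have n1: "(\<exists>t. x (t mod p) \<and> v (Suc s) = v (Suc t) \<and> v s = v t) \<longleftrightarrow> x (s mod p)"
    proof
      assume "\<exists>t. x (t mod p) \<and> v (Suc s) = v (Suc t) \<and> v s = v t"
      then obtain t where "x (t mod p)" "v s = v t" by blast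
      then show "x (s mod p)" using veq by simp
    qed blast
    have n2: "\<not> (\<exists>t. \<not> x (t mod p) \<and> v (Suc s) = v t \<and> v s = v (Suc t))"
    proof
      assume "\<exists>t. \<not> x (t mod p) \<and> v (Suc s) = v t \<and> v s = v (Suc t)"
      then obtain t where "v (Suc s) = v t" "v s = v (Suc t)" by blast
      then have "R (v (Suc s)) (v s)" using Rv[of t] by simp
      then show False using Rv[of s] Rasym by blast
    qed
    show ?thesis unfolding N_def using n1 n2 noloop[of s] M0[of s] by auto
  qed
  have E3: "N (v s) (v s) = (if odd p \<and> s mod p = 0 then \<not> M (v s) (v s) else M (v s) (v s))" for s
  proof -
    have n1: "\<not> (\<exists>t. v s = v (Suc t) \<and> v s = v t)" using noloop by force
    have n3: "v s = v 0 \<longleftrightarrow> s mod p = 0" using veq by simp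
    show ?thesis unfolding N_def using n1 n3 by auto
  qed
  have E4: "N a c = M a c" if "\<forall>t. \<not> ((a = v (Suc t) \<and> c = v t) \<or> (a = v t \<and> c = v (Suc t)))"
    and "\<not> (a = v 0 \<and> c = v 0)" for a c
    using that unfolding N_def by auto
  have rows: "card {w\<in>I. N u w} = card {w\<in>I. M u w} \<and> card {w\<in>I. N w u} = card {w\<in>I. M w u}"
    if uI: "u \<in> I" for u
  proof (cases "u \<in> range v")
    case False
    then have "N u w = M u w \<and> N w u = M w u" for w by (intro conjI E4) auto
    then show ?thesis by simp
  next
    case True
    then obtain k where k: "u = v k" by blast
    define s where "s = k + p - 1"
    have us: "u = v (Suc s)"
    proof -
      have "Suc s = k + p" using p0 by (simp add: s_def)
      then show ?thesis using k veq by simp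
    qed
    define a0 where "a0 = v s"
    define c0 where "c0 = v (Suc (Suc s))"
    have d1: "a0 \<noteq> u" using noloop[of s] us a0_def by simp
    have d2: "u \<noteq> c0" using noloop[of "Suc s"] us c0_def by simp
    have d3: "a0 \<noteq> c0"
    proof
      assume "a0 = c0"
      then have "R u a0" using Rv[of "Suc s"] us a0_def c0_def by simp
      then show False using Rv[of s] Rasym us a0_def by blast
    qed
    have ka: "of_bool (even (s mod p) = b) + of_bool (even (Suc s mod p) = b) - 1
     + (if odd p \<and> Suc s mod p = 0 then (if b then -1 else 1) else 0) = (0::int)"
      by (rule key_arith[OF p0])
    have diag: "(of_bool (N u u) - of_bool (M u u) :: int) =
        (if odd p \<and> Suc s mod p = 0 then (if b then -1 else 1) else 0)"
    proof -
      have "Suc s mod p = 0 \<Longrightarrow> u = v 0" using us veq by simp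
      then show ?thesis using E3[of "Suc s"] us b_def by auto
    qed
    have row: "int (card {w\<in>I. N u w}) = int (card {w\<in>I. M u w})
       + (of_bool (N u a0) - of_bool (M u a0)) + (of_bool (N u u) - of_bool (M u u)) + (of_bool (N u c0) - of_bool (M u c0))"
    proof (rule card_change3[OF fin])
      show "a0 \<in> I" "u \<in> I" "c0 \<in> I" using vI a0_def c0_def uI by auto
      show "a0 \<noteq> u" "a0 \<noteq> c0" "u \<noteq> c0" using d1 d2 d3 by auto
      fix w assume w: "w \<in> I" "w \<noteq> a0" "w \<noteq> u" "w \<noteq> c0"
      show "N u w = M u w"
      proof (rule E4)
        show "\<forall>t. \<not> ((u = v (Suc t) \<and> w = v t) \<or> (u = v t \<and> w = v (Suc t)))"
        proof (intro allI notI)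
          fix t assume "(u = v (Suc t) \<and> w = v t) \<or> (u = v t \<and> w = v (Suc t))"
          then show False
          proof
            assume h: "u = v (Suc t) \<and> w = v t"
            then have "v s = v t" using vpred[of s t] us by simp
            then show False using h w a0_def by simp
          next
            assume h: "u = v t \<and> w = v (Suc t)"
            then have "v (Suc (Suc s)) = v (Suc t)" using vsuc[of "Suc s" t] us by simp
            then show False using h w c0_def by simp
          qed
        qed
        show "\<not> (u = v 0 \<and> w = v 0)" using w by auto
      qed
    qed
    have col: "int (card {w\<in>I. N w u}) = int (card {w\<in>I. M w u})
       + (of_bool (N a0 u) - of_bool (M a0 u)) + (of_bool (N u u) - of_bool (M u u)) + (of_bool (N c0 u) - of_bool (M c0 u))"
    proof (rule card_change3[OF fin])
      show "a0 \<in> I" "u \<in> I" "c0 \<in> I" using vI a0_def c0_def uI by auto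
      show "a0 \<noteq> u" "a0 \<noteq> c0" "u \<noteq> c0" using d1 d2 d3 by auto
      fix w assume w: "w \<in> I" "w \<noteq> a0" "w \<noteq> u" "w \<noteq> c0"
      show "N w u = M w u"
      proof (rule E4)
        show "\<forall>t. \<not> ((w = v (Suc t) \<and> u = v t) \<or> (w = v t \<and> u = v (Suc t)))"
        proof (intro allI notI)
          fix t assume "(w = v (Suc t) \<and> u = v t) \<or> (w = v t \<and> u = v (Suc t))"
          then show False
          proof
            assume h: "w = v (Suc t) \<and> u = v t"
            then have "v (Suc (Suc s)) = v (Suc t)" using vsuc[of "Suc s" t] us by simp
            then show False using h w c0_def by simp
          next
            assume h: "w = v t \<and> u = v (Suc t)"
            then have "v s = v t" using vpred[of s t] us by simp
            then show False using h w a0_def by simp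
          qed
        qed
        show "\<not> (w = v 0 \<and> u = v 0)" using w by auto
      qed
    qed
    have r1: "N u a0 = x (s mod p)" "M u a0 = False" using E2[of s] M0[of s] us a0_def by auto
    have r2: "N u c0 = x (Suc s mod p)" "M u c0 = True" using E1[of "Suc s"] M1[of "Suc s"] us c0_def by auto
    have c1: "N a0 u = x (s mod p)" "M a0 u = True" using E1[of s] M1[of s] us a0_def by auto
    have c2: "N c0 u = x (Suc s mod p)" "M c0 u = False" using E2[of "Suc s"] M0[of "Suc s"] us c0_def by auto
    have "int (card {w\<in>I. N u w}) = int (card {w\<in>I. M u w})"
      using row r1 r2 diag ka unfolding x_def by simp
    moreover have "int (card {w\<in>I. N w u}) = int (card {w\<in>I. M w u})"
      using col c1 c2 diag ka unfolding x_def by simp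
    ultimately show ?thesis by simp
  qed
  have "balanced I N" using rows bal by (auto simp: balanced_def)
  moreover have "asym I N \<subseteq> asym I M"
  proof
    fix z assume z: "z \<in> asym I N"
    then obtain a c where ac: "z = (a, c)" "a \<in> I" "c \<in> I" "N a c" "\<not> N c a" by (auto simp: asym_def)
    show "z \<in> asym I M"
    proof (cases "\<exists>t. (a = v (Suc t) \<and> c = v t) \<or> (a = v t \<and> c = v (Suc t))")
      case True
      then obtain t where "(a = v (Suc t) \<and> c = v t) \<or> (a = v t \<and> c = v (Suc t))" by blast
      then have "N a c = N c a" using E1[of t] E2[of t] by auto
      then show ?thesis using ac by simp
    next
      case False
      have "a \<noteq> c" using ac by auto
      then have "N a c = M a c" "N c a = M c a" using False by (auto intro!: E4)
      then show ?thesis using ac by (auto simp: asym_def)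
    qed
  qed
  moreover have "(v 0, v (Suc 0)) \<in> asym I M" using Rv[of 0] by (simp add: R_def)
  moreover have "(v 0, v (Suc 0)) \<notin> asym I N" using E1[of 0] E2[of 0] by (auto simp: asym_def)
  ultimately show ?thesis using rows by blast
qed

lemma sym_exists:
  assumes "finite I" and "balanced I M"
  shows "\<exists>N. (\<forall>u\<in>I. \<forall>w\<in>I. N u w = N w u) \<and> (\<forall>u\<in>I. card {w\<in>I. N u w} = card {w\<in>I. M u w})"
  using assms
proof (induction "card (asym I M)" arbitrary: M rule: less_induct)
  case less
  show ?case
  proof (cases "asym I M = {}")
    case True
    then have "\<forall>u\<in>I. \<forall>w\<in>I. M u w = M w u" by (auto simp: asym_def)
    then show ?thesis by blast
  next
    case False
    obtain N where N: "balanced I N" "\<forall>u\<in>I. card {w\<in>I. N u w} = card {w\<in>I. M u w}"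
      "asym I N \<subset> asym I M" using step[OF less.prems False] by blast
    have "asym I M \<subseteq> I \<times> I" by (auto simp: asym_def)
    then have "finite (asym I M)" using less.prems(1) by (meson finite_SigmaI finite_subset)
    then have "card (asym I N) < card (asym I M)" using N(3) by (simp add: psubset_card_mono)
    then obtain N' where "(\<forall>u\<in>I. \<forall>w\<in>I. N' u w = N' w u)" "\<forall>u\<in>I. card {w\<in>I. N' u w} = card {w\<in>I. N u w}"
      using less.hyps less.prems(1) N(1) by blast
    then show ?thesis using N(2) by auto
  qed
qed



lemma bij_match:
  assumes "finite A" "finite B" "image_mset f (mset_set A) = image_mset g (mset_set B)"
  shows "\<exists>h. bij_betw h A B \<and> (\<forall>a\<in>A. g (h a) = f a)"
  using assms
proof (induction A arbitrary: B rule: finite_induct)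
  case empty
  then have "mset_set B = {#}" by simp
  then have "B = {}" using empty by (simp add: mset_set_empty_iff)
  then show ?case by (simp add: bij_betw_def)
next
  case (insert a A)
  have "f a \<in># image_mset f (mset_set (insert a A))" using insert.hyps by simp
  then have "f a \<in># image_mset g (mset_set B)" using insert.prems by metis
  then obtain b where b: "b \<in> B" "g b = f a" using insert.prems by auto
  have mB: "mset_set B = add_mset b (mset_set (B - {b}))" using b insert.prems by (simp add: mset_set.remove)
  have "image_mset f (mset_set A) = image_mset g (mset_set (B - {b}))"
    using insert.prems(2) insert.hyps b mB by simp
  then obtain h where h: "bij_betw h A (B - {b})" "\<forall>a\<in>A. g (h a) = f a"
    using insert.IH insert.prems by blast
  define h' where "h' = h(a := b)"
  have "bij_betw h' A (B - {b})" unfolding h'_def using h(1) insert.hyps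
    by (metis bij_betw_cong fun_upd_other)
  then have "bij_betw h' (insert a A) (insert b (B - {b}))"
    using insert.hyps notIn_Un_bij_betw3[of a A h' "B - {b}"] by (simp add: h'_def)
  moreover have "insert b (B - {b}) = B" using b by auto
  moreover have "\<forall>x\<in>insert a A. g (h' x) = f x" using h(2) b insert.hyps by (auto simp: h'_def)
  ultimately show ?case by metis
qed

lemma card_bij_filter:
  assumes "bij_betw \<psi> A B"
  shows "card {w\<in>A. Q (\<psi> w)} = card {y\<in>B. Q y}"
proof -
  have "\<psi> ` {w\<in>A. Q (\<psi> w)} = {y\<in>B. Q y}" using assms by (auto simp: bij_betw_def)
  moreover have "inj_on \<psi> {w\<in>A. Q (\<psi> w)}" using assms by (auto simp: bij_betw_def intro: inj_on_subset)
  ultimately show ?thesis by (metis card_image)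
qed

theorem theorem1:
  fixes P :: "nat list"
  shows "mirror_bigraphic P \<longleftrightarrow> bigraphic P P"
proof
  assume "mirror_bigraphic P" then show "bigraphic P P" by (simp add: mirror_bigraphic_def)
next
  assume bg: "bigraphic P P"
  then obtain V1 V2 E where r: "realizes V1 V2 E P P" by (auto simp: bigraphic_def)
  then have f1: "finite V1" and f2: "finite V2" and sub: "E \<subseteq> V1 \<times> V2"
    and d1: "image_mset (deg1 E V2) (mset_set V1) = mset P"
    and d2: "image_mset (deg2 E V1) (mset_set V2) = mset P"
    by (auto simp: realizes_def bip_graph_def)
  obtain \<psi> where psi: "bij_betw \<psi> V1 V2" and pd: "\<forall>a\<in>V1. deg2 E V1 (\<psi> a) = deg1 E V2 a"
    using bij_match[OF f1 f2, of "deg1 E V2" "deg2 E V1"] d1 d2 by auto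
  have inj: "inj_on \<psi> V1" using psi by (simp add: bij_betw_def)
  define M where "M u w = ((u, \<psi> w) \<in> E)" for u w
  have rowM: "card {w\<in>V1. M u w} = deg1 E V2 u" for u
    unfolding M_def deg1_def by (rule card_bij_filter[OF psi])
  have colM: "card {w\<in>V1. M w u} = deg1 E V2 u" if "u \<in> V1" for u
    using pd that unfolding M_def deg2_def by auto
  have "balanced V1 M" using rowM colM by (simp add: balanced_def)
  then obtain N where Ns: "\<forall>u\<in>V1. \<forall>w\<in>V1. N u w = N w u"
    and Nr: "\<forall>u\<in>V1. card {w\<in>V1. N u w} = card {w\<in>V1. M u w}"
    using sym_exists[OF f1] by blast
  define E' where "E' = {(u, \<psi> w) | u w. u \<in> V1 \<and> w \<in> V1 \<and> N u w}"
  have mem: "(u, \<psi> w) \<in> E' \<longleftrightarrow> N u w" if "u \<in> V1" "w \<in> V1" for u w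
    using that inj unfolding E'_def by (auto dest: inj_onD)
  have sub': "E' \<subseteq> V1 \<times> V2" using psi unfolding E'_def by (auto simp: bij_betw_def)
  have deg1': "deg1 E' V2 u = deg1 E V2 u" if "u \<in> V1" for u
  proof -
    have "deg1 E' V2 u = card {w\<in>V1. (u, \<psi> w) \<in> E'}"
      unfolding deg1_def by (rule card_bij_filter[OF psi, symmetric])
    also have "\<dots> = card {w\<in>V1. N u w}" using mem that by (intro arg_cong[where f=card]) auto
    also have "\<dots> = deg1 E V2 u" using Nr rowM that by auto
    finally show ?thesis .
  qed
  have deg2': "deg2 E' V1 y = deg2 E V1 y" if yV: "y \<in> V2" for y
  proof -
    obtain w where w: "w \<in> V1" "y = \<psi> w" using yV psi unfolding bij_betw_def by blast
    have "deg2 E' V1 y = card {u\<in>V1. N u w}"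
      unfolding deg2_def w(2) using mem w(1) by (intro arg_cong[where f=card]) auto
    also have "\<dots> = card {u\<in>V1. N w u}" using Ns w(1) by (intro arg_cong[where f=card]) auto
    also have "\<dots> = deg1 E V2 w" using Nr rowM w(1) by auto
    also have "\<dots> = deg2 E V1 y" using pd w by auto
    finally show ?thesis .
  qed
  have "realizes V1 V2 E' P P"
    unfolding realizes_def bip_graph_def
  proof (intro conjI)
    show "image_mset (deg1 E' V2) (mset_set V1) = mset P"
      using d1 deg1' f1 by (metis image_mset_cong elem_mset_set)
    show "image_mset (deg2 E' V1) (mset_set V2) = mset P"
      using d2 deg2' f2 by (metis image_mset_cong elem_mset_set)
  qed (use f1 f2 sub' in auto)
  moreover have "mirror V1 V2 E'"
    unfolding mirror_def using psi mem Ns by blast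
  ultimately show "mirror_bigraphic P" using bg by (auto simp: mirror_bigraphic_def)
qed

end
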